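(* Consider the two-player treatment model described in the context, and suppose that: (a) $P_j^1-P_j^0>0$ almost surely for $j=1,2$; (b) $P_j^0,P_j^1$ ($j=1,2$) are identified, and the conditional CDF $H(v_1,v_2\mid x)$ and density $h(v_1,v_2\mid x)$ of $V$ given $X=x$ are identified; (c) for all $(d_1,d_2)\in\{0,1\}^2$, $Z=(Z_1,Z_2)$ is excluded from the structural functions $\mu_j^{(d_1,d_2)}$ and is independent of $(\varepsilon,U^{(d_1,d_2)})$ given $X$; (d) for $j=1,2$, $Z_j$ contains a player-specific continuous variable such that $\pi_j^0(W_j)$ and $\pi_j^1(W_j)$ are non-degenerate and continuously distributed given $X$; (e) there exist a constant $\lambda\in[0,1]$ and an unobserved random variable $\epsilon\sim$ Uniform$[0,1]$, independent of $(W,\varepsilon,U^{(d_1,d_2)})$ for all $(d_1,d_2)$, such that $D=(0,0)$ if and only if $V\in\mathcal V^{(0,0)}_{\mathrm{uni}}(\mathbf P)$ or ($V\in\mathcal V_{\mathrm{mul}}(\mathbf P)$ and $\epsilon\le\lambda$); and (f) $\lambda$ is identified (known). Fix $x$ and suppose $m^{(0,0)}(x,v_1,v_2)$, $m^{(1,1)}(x,v_1,v_2)$ and $h(v_1,v_2\mid x)$ are continuous in $(v_1,v_2)$. Then, with $\mathbf p=(p_1^0,p_1^1,p_2^0,p_2^1)$ in the relevant conditional support $\operatorname{supp}[\mathbf P\mid X=x,D=(d_1,d_2)]$, $$m^{(0,0)}(x,p_1^0,p_2^0)=\frac{1}{\lambda h(p_1^0,p_2^0\mid x)}\frac{\partial^2\psi^{(0,0)}(x,\mathbf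 p)}{\partial p_1^0\partial p_2^0}\ \ (\lambda>0),$$ $$m^{(0,0)}(x,p_1^{d_1},p_2^{d_2})=\frac{1}{(1-\lambda)h(p_1^{d_1},p_2^{d_2}\mid x)}\frac{\partial^2\psi^{(0,0)}(x,\mathbf p)}{\partial p_1^{d_1}\partial p_2^{d_2}}\ \ (\lambda<1,\ d_1\ne d_2),$$ $$m^{(0,0)}(x,p_1^1,p_2^1)=-\frac{1}{(1-\lambda)h(p_1^1,p_2^1\mid x)}\frac{\partial^2\psi^{(0,0)}(x,\mathbf p)}{\partial p_1^1\partial p_2^1}\ \ (\lambda<1),$$ and $$m^{(1,1)}(x,p_1^0,p_2^0)=-\frac{1}{\lambda h(p_1^0,p_2^0\mid x)}\frac{\partial^2\psi^{(1,1)}(x,\mathbf p)}{\partial p_1^0\partial p_2^0}\ \ (\lambda>0),$$ $$m^{(1,1)}(x,p_1^{d_1},p_2^{d_2})=\frac{1}{\lambda h(p_1^{d_1},p_2^{d_2}\mid x)}\frac{\partial^2\psi^{(1,1)}(x,\mathbf p)}{\partial p_1^{d_1}\partial p_2^{d_2}}\ \ (\lambda>0,\ d_1\ne d_2),$$ $$m^{(1,1)}(x,p_1^1,p_2^1)=\frac{1}{(1-\lambda)h(p_1^1,p_2^1\mid x)}\frac{\partial^2\psi^{(1,1)}(x,\mathbf p)}{\partial p_1^1\partial p_2^1}\ \ (\lambda<1),$$ so that these MTR functions are identified.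
   Context: Two players $j\in\{1,2\}$ ($-j$ the partner), binary treatments $D_j$, $D=(D_1,D_2)$. Potential outcomes $Y_j^{(d_j,d_{-j})}=\mu_j^{(d_j,d_{-j})}(X_j,U_j^{(d_j,d_{-j})})$; observed $Y_1=\sum_{d_1,d_2}I^{(d_1,d_2)}Y_1^{(d_1,d_2)}$ with $I^{(d_1,d_2)}=\mathbf 1\{(D_1,D_2)=(d_1,d_2)\}$. $X=(X_1,X_2)$, $W_j=(X_j^\top,Z_j^\top)^\top$ with instruments $Z_j$, $W=(W_1,W_2)$, $\varepsilon=(\varepsilon_1,\varepsilon_2)$ continuous, $U^{(d_1,d_2)}=(U_1^{(d_1,d_2)},U_2^{(d_2,d_1)})$. Treatments: $D_j=\mathbf 1\{\pi_j(D_{-j},W_j)\ge\varepsilon_j\}$, $\pi_j^d(\cdot)=\pi_j(d,\cdot)$. $V_j=F_{\varepsilon_j}(\varepsilon_j\mid X)$, $P_j^d=F_{\varepsilon_j}(\pi_j^d(W_j)\mid X)$ for $d=0,1$, where $F_{\varepsilon_j}(\cdot\mid X)$ is the conditional CDF of $\varepsilon_j$ given $X$; $V=(V_1,V_2)$; $\mathbf P=(P_1^0,P_1^1,P_2^0,P_2^1)$. The realized $D$ is a pure-strategy Nash equilibrium of the game with payoffs $u_j(d_j,d_{-j})=d_j(P_j^0+d_{-j}(P_j^1-P_j^0)-V_j)$; under complementarity: $D=(1,0)\iff V_1\le P_1^0,V_2>P_2^1$; $D=(0,1)\iff V_1>P_1^1,V_2\le P_2^0$; $D=(1,1)\Rightarrow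 V_1\le P_1^1,V_2\le P_2^1$; $D=(0,0)\Rightarrow V_1>P_1^0,V_2>P_2^0$. Multiple-equilibria region: $\mathcal V_{\mathrm{mul}}(\mathbf P)=\{(v_1,v_2)\in[0,1]^2:P_1^0<v_1\le P_1^1,\ P_2^0<v_2\le P_2^1\}$; $\mathcal V^{(0,0)}_{\mathrm{uni}}(\mathbf P)=\{(v_1,v_2)\in[0,1]^2:P_1^0<v_1,\ P_2^0<v_2\}\setminus\mathcal V_{\mathrm{mul}}(\mathbf P)$. MTR function: $m^{(d_1,d_2)}(x,p_1,p_2)=E[Y_1^{(d_1,d_2)}\mid X=x,V_1=p_1,V_2=p_2]$. $\psi^{(d_1,d_2)}(x,\mathbf p)=E[I^{(d_1,d_2)}Y_1\mid X=x,\mathbf P=\mathbf p]$ for $\mathbf p\in\operatorname{supp}[\mathbf P\mid X=x,D=(d_1,d_2)]$, identified from data. *)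

theory Defs
  imports "HOL-Probability.Probability"
begin

text \<open>Treatments are encoded as booleans: True = 1 (treated), False = 0.
  A treatment profile is a pair (d1, d2) :: bool \<times> bool.\<close>

definition payoff :: "real \<Rightarrow> real \<Rightarrow> real \<Rightarrow> bool \<Rightarrow> bool \<Rightarrow> real" where
  "payoff P0 P1 v dj doth =
     (if dj then P0 + (if doth then P1 - P0 else 0) - v else 0)"

fun is_pure_NE :: "real \<Rightarrow> real \<Rightarrow> real \<Rightarrow> real \<Rightarrow> real \<times> real \<Rightarrow> bool \<times> bool \<Rightarrow> bool" where
  "is_pure_NE p10 p11 p20 p21 (v1, v2) (d1, d2) \<longleftrightarrow>
     payoff p10 p11 v1 d1 d2 \<ge> payoff p10 p11 v1 (\<not> d1) d2 \<and>
     payoff p20 p21 v2 d2 d1 \<ge> payoff p20 p21 v2 (\<not> d2) d1"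

definition V_mul :: "real \<Rightarrow> real \<Rightarrow> real \<Rightarrow> real \<Rightarrow> (real \<times> real) set" where
  "V_mul p10 p11 p20 p21 =
     {(v1, v2). 0 \<le> v1 \<and> v1 \<le> 1 \<and> 0 \<le> v2 \<and> v2 \<le> 1 \<and>
                p10 < v1 \<and> v1 \<le> p11 \<and> p20 < v2 \<and> v2 \<le> p21}"

definition V_uni00 :: "real \<Rightarrow> real \<Rightarrow> real \<Rightarrow> real \<Rightarrow> (real \<times> real) set" where
  "V_uni00 p10 p11 p20 p21 =
     {(v1, v2). 0 \<le> v1 \<and> v1 \<le> 1 \<and> 0 \<le> v2 \<and> v2 \<le> 1 \<and> p10 < v1 \<and> p20 < v2}
     - V_mul p10 p11 p20 p21"

definition has_mixed_partial :: "(real \<Rightarrow> real \<Rightarrow> real) \<Rightarrow> real \<Rightarrow> real \<Rightarrow> real \<Rightarrow> bool" where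
  "has_mixed_partial f a b D \<longleftrightarrow>
     (\<forall>\<^sub>F t in nhds b. (\<lambda>s. f s t) differentiable (at a)) \<and>
     ((\<lambda>t. deriv (\<lambda>s. f s t) a) has_real_derivative D) (at b)"

text \<open>Independence of two random variables with (possibly different) Borel codomains
  (the library's indep_var requires both codomains to have the same type).\<close>
definition indep_rv :: "'a measure \<Rightarrow> ('a \<Rightarrow> 'b::topological_space) \<Rightarrow> ('a \<Rightarrow> 'c::topological_space) \<Rightarrow> bool" where
  "indep_rv M X Y \<longleftrightarrow>
     X \<in> borel_measurable M \<and> Y \<in> borel_measurable M \<and>
     (\<forall>A \<in> sets borel. \<forall>B \<in> sets borel.
        measure M {\<omega> \<in> space M. X \<omega> \<in> A \<and> Y \<omega> \<in> B} =
        measure M {\<omega> \<in> space M. X \<omega> \<in> A} * measure M {\<omega> \<in> space M. Y \<omega> \<in> B})"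

end

theory Submission
  imports Defs
begin

definition Gf :: "(real \<times> real \<Rightarrow> real) \<Rightarrow> real \<Rightarrow> real \<Rightarrow> real" where
  "Gf f a b = integral {0..a} (\<lambda>x. integral {0..b} (\<lambda>y. f (x, y)))"

lemma Gf_lborel:
  fixes f :: "real \<times> real \<Rightarrow> real"
  assumes cont: "continuous_on ({0..1} \<times> {0..1}) f"
    and ab: "0 \<le> a" "a \<le> 1" "0 \<le> b" "b \<le> 1"
  shows "(\<integral>v. indicator ({..a} \<times> {..b}) v * (indicator ({0..1} \<times> {0..1}) v * f v) \<partial>lborel) = Gf f a b"
proof -
  let ?S = "cbox (0::real,0::real) (a,b)"
  have S: "?S = {0..a} \<times> {0..b}" by (simp add: cbox_Pair_eq)
  have pw: "\<And>v. indicator ({..a} \<times> {..b}) v * (indicator ({0..1} \<times> {0..1}) v * f v) = indicator ?S v *\<^sub>R f v"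
    using ab unfolding S by (auto simp: indicator_def)
  have c: "continuous_on ?S f"
    by (rule continuous_on_subset[OF cont]) (use ab in \<open>auto simp: S\<close>)
  have si: "set_integrable lborel ?S f"
    unfolding set_integrable_def by (rule borel_integrable_compact[OF compact_cbox c])
  have "(\<integral>v. indicator ({..a} \<times> {..b}) v * (indicator ({0..1} \<times> {0..1}) v * f v) \<partial>lborel)
      = (LINT v : ?S | lborel. f v)"
    unfolding set_lebesgue_integral_def pw ..
  also have "\<dots> = integral ?S f" by (rule set_borel_integral_eq_integral(2)[OF si])
  also have "\<dots> = integral (cbox 0 a) (\<lambda>x. integral (cbox 0 b) (\<lambda>y. f (x, y)))"
    by (rule integral_prod_continuous[OF c])
  finally show ?thesis by (simp add: Gf_def)
qed

lemma phi_cont: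
  fixes f :: "real \<times> real \<Rightarrow> real"
  assumes cont: "continuous_on ({0..1} \<times> {0..1}) f" and b: "0 \<le> b" "b \<le> 1"
  shows "continuous_on {0..1} (\<lambda>x. integral {0..b} (\<lambda>y. f (x, y)))"
proof -
  have e: "(\<lambda>(x, t). f (x, t)) = f" by auto
  have "continuous_on ({0..1} \<times> {0..b}) (\<lambda>(x, t). f (x, t))"
    unfolding e by (rule continuous_on_subset[OF cont]) (use b in auto)
  from integral_continuous_on_param[OF this[folded cbox_interval]] show ?thesis by (simp add: cbox_interval)
qed

lemma Gf_deriv1:
  fixes f :: "real \<times> real \<Rightarrow> real"
  assumes cont: "continuous_on ({0..1} \<times> {0..1}) f" and b: "0 \<le> b" "b \<le> 1" and a: "0 < a" "a < 1"
  shows "((\<lambda>s. Gf f s b) has_real_derivative integral {0..b} (\<lambda>y. f (a, y))) (at a)"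
proof -
  have "((\<lambda>s. Gf f s b) has_real_derivative integral {0..b} (\<lambda>y. f (a, y))) (at a within {0..1})"
    unfolding Gf_def by (rule integral_has_real_derivative[OF phi_cont[OF cont b]]) (use a in auto)
  then show ?thesis using a by (simp add: at_within_Icc_at)
qed

lemma Gf_deriv2:
  fixes f :: "real \<times> real \<Rightarrow> real"
  assumes cont: "continuous_on ({0..1} \<times> {0..1}) f" and a: "0 \<le> a" "a \<le> 1" and b: "0 < b" "b < 1"
  shows "((\<lambda>t. integral {0..t} (\<lambda>y. f (a, y))) has_real_derivative f (a, b)) (at b)"
proof -
  have c: "continuous_on {0..1} (\<lambda>y. f (a, y))"
    by (rule continuous_on_compose2[OF cont]) (use a in \<open>auto intro!: continuous_intros\<close>)
  have "((\<lambda>t. integral {0..t} (\<lambda>y. f (a, y))) has_real_derivative f (a, b)) (at b within {0..1})"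
    by (rule integral_has_real_derivative[OF c]) (use b in auto)
  then show ?thesis using b by (simp add: at_within_Icc_at)
qed

lemma mixed:
  fixes f :: "real \<times> real \<Rightarrow> real"
  assumes cont: "continuous_on ({0..1} \<times> {0..1}) f"
    and a: "0 < a" "a < 1" and b: "0 < b" "b < 1" and r: "r > 0"
    and eq: "\<And>s t. \<bar>s - a\<bar> < r \<Longrightarrow> \<bar>t - b\<bar> < r \<Longrightarrow> F s t = kt t + ks s + c * Gf f s t"
    and ks: "(ks has_real_derivative ks') (at a)"
  shows "has_mixed_partial F a b (c * f (a, b))"
proof -
  define r' where "r' = min r (min b (1 - b))"
  have r': "r' > 0" using r b by (simp add: r'_def)
  have dF: "((\<lambda>s. F s t) has_real_derivative ks' + c * integral {0..t} (\<lambda>y. f (a, y))) (at a)"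
    if t: "\<bar>t - b\<bar> < r'" for t
  proof -
    have t01: "0 \<le> t" "t \<le> 1" using t by (auto simp: r'_def abs_less_iff)
    have ev: "eventually (\<lambda>s. F s t = kt t + ks s + c * Gf f s t) (nhds a)"
      unfolding eventually_nhds_metric
      by (rule exI[of _ r]) (use r t in \<open>auto simp: r'_def dist_real_def intro!: eq\<close>)
    have "((\<lambda>s. kt t + ks s + c * Gf f s t) has_real_derivative 0 + ks' + c * integral {0..t} (\<lambda>y. f (a, y))) (at a)"
      by (intro DERIV_add DERIV_const ks DERIV_cmult Gf_deriv1[OF cont t01 a])
    then show ?thesis
      by (subst DERIV_cong_ev[OF refl ev refl]) simp
  qed
  have 1: "\<forall>\<^sub>F t in nhds b. (\<lambda>s. F s t) differentiable (at a)"
    unfolding eventually_nhds_metric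
    by (rule exI[of _ r']) (use r' in \<open>auto simp: dist_real_def real_differentiable_def intro: dF\<close>)
  have ev2: "eventually (\<lambda>t. deriv (\<lambda>s. F s t) a = ks' + c * integral {0..t} (\<lambda>y. f (a, y))) (nhds b)"
    unfolding eventually_nhds_metric
    by (rule exI[of _ r']) (use r' in \<open>auto simp: dist_real_def intro: DERIV_imp_deriv dF\<close>)
  have "((\<lambda>t. ks' + c * integral {0..t} (\<lambda>y. f (a, y))) has_real_derivative 0 + c * f (a, b)) (at b)"
    by (intro DERIV_add DERIV_const DERIV_cmult Gf_deriv2[OF cont _ _ b]) (use a in auto)
  then have 2: "((\<lambda>t. deriv (\<lambda>s. F s t) a) has_real_derivative c * f (a, b)) (at b)"
    by (subst DERIV_cong_ev[OF refl ev2 refl]) simp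
  show ?thesis unfolding has_mixed_partial_def using 1 2 by blast
qed

lemma indep_rv_compose:
  fixes X :: "'a \<Rightarrow> 'b::topological_space" and Z :: "'a \<Rightarrow> 'c::topological_space"
    and f :: "'b \<Rightarrow> real" and g :: "'c \<Rightarrow> real"
  assumes M: "prob_space M" and ind: "indep_rv M X Z"
    and f: "f \<in> borel_measurable borel" and g: "g \<in> borel_measurable borel"
  shows "prob_space.indep_var M borel (\<lambda>\<omega>. f (X \<omega>)) borel (\<lambda>\<omega>. g (Z \<omega>))"
proof -
  interpret prob_space M by (rule M)
  have X: "X \<in> borel_measurable M" and Z: "Z \<in> borel_measurable M"
    and eq: "\<And>A B. A \<in> sets borel \<Longrightarrow> B \<in> sets borel \<Longrightarrow>
        measure M {\<omega> \<in> space M. X \<omega> \<in> A \<and> Z \<omega> \<in> B} =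
        measure M {\<omega> \<in> space M. X \<omega> \<in> A} * measure M {\<omega> \<in> space M. Z \<omega> \<in> B}"
    using ind unfolding indep_rv_def by auto
  have fX: "(\<lambda>\<omega>. f (X \<omega>)) \<in> borel_measurable M" using f X by measurable
  have gZ: "(\<lambda>\<omega>. g (Z \<omega>)) \<in> borel_measurable M" using g Z by measurable
  let ?A = "{(\<lambda>\<omega>. f (X \<omega>)) -` A \<inter> space M | A. A \<in> sets (borel :: real measure)}"
  let ?B = "{(\<lambda>\<omega>. g (Z \<omega>)) -` A \<inter> space M | A. A \<in> sets (borel :: real measure)}"
  have "indep_set ?A ?B"
    unfolding indep_sets2_eq
  proof (intro conjI ballI)
    show "?A \<subseteq> events" using fX by (auto intro: measurable_sets)
    show "?B \<subseteq> events" using gZ by (auto intro: measurable_sets)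
    fix a b assume a: "a \<in> ?A" and b: "b \<in> ?B"
    then obtain S1 S2 where S1: "S1 \<in> sets borel" "a = (\<lambda>\<omega>. f (X \<omega>)) -` S1 \<inter> space M"
      and S2: "S2 \<in> sets borel" "b = (\<lambda>\<omega>. g (Z \<omega>)) -` S2 \<inter> space M" by auto
    have f1: "f -` S1 \<in> sets borel" using f S1(1) by (rule measurable_sets_borel)
    have g2: "g -` S2 \<in> sets borel" using g S2(1) by (rule measurable_sets_borel)
    have "a \<inter> b = {\<omega> \<in> space M. X \<omega> \<in> f -` S1 \<and> Z \<omega> \<in> g -` S2}" using S1 S2 by auto
    moreover have "a = {\<omega> \<in> space M. X \<omega> \<in> f -` S1}" using S1 by auto
    moreover have "b = {\<omega> \<in> space M. Z \<omega> \<in> g -` S2}" using S2 by auto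
    ultimately show "prob (a \<inter> b) = prob a * prob b" using eq[OF f1 g2] by simp
  qed
  then have "indep_set (sigma_sets (space M) ?A) (sigma_sets (space M) ?B)"
  proof (rule indep_set_sigma_sets)
    show "Int_stable ?A" unfolding Int_stable_def
    proof (intro ballI)
      fix a b assume "a \<in> ?A" "b \<in> ?A"
      then obtain S1 S2 where "S1 \<in> sets borel" "a = (\<lambda>\<omega>. f (X \<omega>)) -` S1 \<inter> space M"
        "S2 \<in> sets borel" "b = (\<lambda>\<omega>. f (X \<omega>)) -` S2 \<inter> space M" by blast
      then show "a \<inter> b \<in> ?A"
        by (intro CollectI exI[of _ "S1 \<inter> S2"]) auto
    qed
    show "Int_stable ?B" unfolding Int_stable_def
    proof (intro ballI)
      fix a b assume "a \<in> ?B" "b \<in> ?B"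
      then obtain S1 S2 where "S1 \<in> sets borel" "a = (\<lambda>\<omega>. g (Z \<omega>)) -` S1 \<inter> space M"
        "S2 \<in> sets borel" "b = (\<lambda>\<omega>. g (Z \<omega>)) -` S2 \<inter> space M" by blast
      then show "a \<inter> b \<in> ?B"
        by (intro CollectI exI[of _ "S1 \<inter> S2"]) auto
    qed
  qed
  then show ?thesis unfolding indep_var_eq using fX gZ by simp
qed

definition RR :: "real \<Rightarrow> real \<Rightarrow> real \<times> real \<Rightarrow> real \<Rightarrow> real" where
  "RR a b v y = indicator ({..a} \<times> {..b}) v * y"
definition RE :: "real \<Rightarrow> real \<Rightarrow> real \<Rightarrow> real \<times> real \<Rightarrow> real \<Rightarrow> real \<Rightarrow> real" where
  "RE lam a b v e y = indicator ({..a} \<times> {..b}) v * indicator {..lam} e * y"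

lemma sum_sel:
  fixes x d :: "bool \<times> bool" and Y :: "bool \<times> bool \<Rightarrow> real"
  shows "(if x = d then 1 else 0) * (\<Sum>d'\<in>UNIV. (if x = d' then 1 else 0) * Y d') = (if x = d then Y d else 0)"
proof -
  have "(\<Sum>d'\<in>UNIV. (if x = d' then 1 else 0) * Y d') = (\<Sum>d'\<in>UNIV. if x = d' then Y d' else 0)"
    by (rule sum.cong) auto
  also have "\<dots> = Y x" by simp
  finally show ?thesis by simp
qed

lemma comb00:
  fixes v1 v2 q10 q11 q20 q21 e lam y :: real
  assumes "0 \<le> v1" "v1 \<le> 1" "0 \<le> v2" "v2 \<le> 1" "0 < q10" "q10 < q11" "q11 < 1" "0 < q20" "q20 < q21" "q21 < 1"
  shows "(if (v1,v2) \<in> V_uni00 q10 q11 q20 q21 \<or> ((v1,v2) \<in> V_mul q10 q11 q20 q21 \<and> e \<le> lam) then y else 0)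
   = RR 1 1 (v1,v2) y - RR q10 1 (v1,v2) y - RR 1 q20 (v1,v2) y + RR q10 q20 (v1,v2) y
     - (RR q11 q21 (v1,v2) y - RR q10 q21 (v1,v2) y - RR q11 q20 (v1,v2) y + RR q10 q20 (v1,v2) y)
     + (RE lam q11 q21 (v1,v2) e y - RE lam q10 q21 (v1,v2) e y - RE lam q11 q20 (v1,v2) e y + RE lam q10 q20 (v1,v2) e y)"
  using assms
  by (cases "v1 \<le> q10"; cases "v1 \<le> q11"; cases "v2 \<le> q20"; cases "v2 \<le> q21"; cases "e \<le> lam")
     (simp_all add: RR_def RE_def V_uni00_def V_mul_def indicator_def)

lemma comb11:
  fixes v1 v2 q10 q11 q20 q21 e lam y :: real
  assumes "0 \<le> v1" "v1 \<le> 1" "0 \<le> v2" "v2 \<le> 1" "0 < q10" "q10 < q11" "q11 < 1" "0 < q20" "q20 < q21" "q21 < 1"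
    and ne: "v1 \<noteq> q11" "v2 \<noteq> q21"
    and NE: "is_pure_NE q10 q11 q20 q21 (v1, v2) D"
    and sel: "D = (False, False) \<longleftrightarrow> (v1,v2) \<in> V_uni00 q10 q11 q20 q21 \<or> ((v1,v2) \<in> V_mul q10 q11 q20 q21 \<and> e \<le> lam)"
  shows "(if D = (True, True) then y else 0)
   = RR q11 q21 (v1,v2) y
     - (RE lam q11 q21 (v1,v2) e y - RE lam q10 q21 (v1,v2) e y - RE lam q11 q20 (v1,v2) e y + RE lam q10 q20 (v1,v2) e y)"
proof -
  obtain d1 d2 where D: "D = (d1, d2)" by (cases D)
  show ?thesis using assms unfolding D
    apply (cases d1; cases d2)
    apply (simp_all add: payoff_def)
    apply (cases "v1 \<le> q10"; cases "v2 \<le> q20"; cases "e \<le> lam"; simp add: RR_def RE_def V_uni00_def V_mul_def indicator_def)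
    apply (cases "v1 \<le> q10"; cases "v1 \<le> q11"; cases "v2 \<le> q20"; cases "v2 \<le> q21"; cases "e \<le> lam"; simp add: RR_def RE_def V_uni00_def V_mul_def indicator_def)
    apply (cases "v1 \<le> q10"; cases "v1 \<le> q11"; cases "v2 \<le> q20"; cases "v2 \<le> q21"; cases "e \<le> lam"; simp add: RR_def RE_def V_uni00_def V_mul_def indicator_def)
    apply (cases "v1 \<le> q10"; cases "v1 \<le> q11"; cases "v2 \<le> q20"; cases "v2 \<le> q21"; cases "e \<le> lam"; simp add: RR_def RE_def V_uni00_def V_mul_def indicator_def)
    done
qed

theorem theorem2:
  fixes M :: "'a measure"
    and V :: "'a \<Rightarrow> real \<times> real"
    and eps :: "'a \<Rightarrow> real"
    and Y :: "bool \<times> bool \<Rightarrow> 'a \<Rightarrow> real"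
    and Dsel :: "real \<Rightarrow> real \<Rightarrow> real \<Rightarrow> real \<Rightarrow> 'a \<Rightarrow> bool \<times> bool"
    and lam :: real
    and h :: "real \<times> real \<Rightarrow> real"
    and m :: "bool \<times> bool \<Rightarrow> real \<times> real \<Rightarrow> real"
    and psi :: "bool \<times> bool \<Rightarrow> real \<Rightarrow> real \<Rightarrow> real \<Rightarrow> real \<Rightarrow> real"
    and p10 p11 p20 p21 :: real
  assumes M: "prob_space M"
    and V_range: "\<And>\<omega>. \<omega> \<in> space M \<Longrightarrow> V \<omega> \<in> {0..1} \<times> {0..1}"
    and h_nonneg: "\<And>v. 0 \<le> h v"
    and V_density: "distributed M lborel V (\<lambda>v. ennreal (h v))"
    and eps_unif: "distributed M lborel eps (\<lambda>e. indicator {0..1::real} e :: ennreal)"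
    and eps_indep: "\<And>d. indep_rv M eps (\<lambda>\<omega>. (V \<omega>, Y d \<omega>))"
    and Y_int: "\<And>d. integrable M (Y d)"
    and lam: "0 \<le> lam" "lam \<le> 1"
    and D_meas: "\<And>q10 q11 q20 q21. Dsel q10 q11 q20 q21 \<in> M \<rightarrow>\<^sub>M count_space UNIV"
    and D_NE: "\<And>q10 q11 q20 q21 \<omega>. \<lbrakk>0 < q10; q10 < q11; q11 < 1; 0 < q20; q20 < q21; q21 < 1;
                 \<omega> \<in> space M\<rbrakk> \<Longrightarrow> is_pure_NE q10 q11 q20 q21 (V \<omega>) (Dsel q10 q11 q20 q21 \<omega>)"
    and D_sel: "\<And>q10 q11 q20 q21 \<omega>. \<lbrakk>0 < q10; q10 < q11; q11 < 1; 0 < q20; q20 < q21; q21 < 1;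
                 \<omega> \<in> space M\<rbrakk> \<Longrightarrow>
                 (Dsel q10 q11 q20 q21 \<omega> = (False, False) \<longleftrightarrow>
                    V \<omega> \<in> V_uni00 q10 q11 q20 q21 \<or>
                    (V \<omega> \<in> V_mul q10 q11 q20 q21 \<and> eps \<omega> \<le> lam))"
    and m_MTR: "\<And>d B. B \<in> sets borel \<Longrightarrow>
                 (\<integral>\<omega>. indicator B (V \<omega>) * Y d \<omega> \<partial>M) = (\<integral>v. indicator B v * (m d v * h v) \<partial>lborel)"
    and psi_def: "\<And>d q10 q11 q20 q21. \<lbrakk>0 < q10; q10 < q11; q11 < 1; 0 < q20; q20 < q21; q21 < 1\<rbrakk> \<Longrightarrow>
                 psi d q10 q11 q20 q21 =
                   (\<integral>\<omega>. (if Dsel q10 q11 q20 q21 \<omega> = d then 1 else 0) *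
                         (\<Sum>d'\<in>UNIV. (if Dsel q10 q11 q20 q21 \<omega> = d' then 1 else 0) * Y d' \<omega>) \<partial>M)"
    and m00_cont: "continuous_on ({0..1} \<times> {0..1}) (m (False, False))"
    and m11_cont: "continuous_on ({0..1} \<times> {0..1}) (m (True, True))"
    and h_cont: "continuous_on ({0..1} \<times> {0..1}) h"
    and p: "0 < p10" "p10 < p11" "p11 < 1" "0 < p20" "p20 < p21" "p21 < 1"
  shows
    "(\<exists>D. has_mixed_partial (\<lambda>s t. psi (False, False) s p11 t p21) p10 p20 D \<and>
        (lam > 0 \<longrightarrow> h (p10, p20) > 0 \<longrightarrow>
           m (False, False) (p10, p20) = 1 / (lam * h (p10, p20)) * D)) \<and>
     (\<exists>D. has_mixed_partial (\<lambda>s t. psi (False, False) s p11 p20 t) p10 p21 D \<and>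
        (lam < 1 \<longrightarrow> h (p10, p21) > 0 \<longrightarrow>
           m (False, False) (p10, p21) = 1 / ((1 - lam) * h (p10, p21)) * D)) \<and>
     (\<exists>D. has_mixed_partial (\<lambda>s t. psi (False, False) p10 s t p21) p11 p20 D \<and>
        (lam < 1 \<longrightarrow> h (p11, p20) > 0 \<longrightarrow>
           m (False, False) (p11, p20) = 1 / ((1 - lam) * h (p11, p20)) * D)) \<and>
     (\<exists>D. has_mixed_partial (\<lambda>s t. psi (False, False) p10 s p20 t) p11 p21 D \<and>
        (lam < 1 \<longrightarrow> h (p11, p21) > 0 \<longrightarrow>
           m (False, False) (p11, p21) = - (1 / ((1 - lam) * h (p11, p21))) * D)) \<and>
     (\<exists>D. has_mixed_partial (\<lambda>s t. psi (True, True) s p11 t p21) p10 p20 D \<and>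
        (lam > 0 \<longrightarrow> h (p10, p20) > 0 \<longrightarrow>
           m (True, True) (p10, p20) = - (1 / (lam * h (p10, p20))) * D)) \<and>
     (\<exists>D. has_mixed_partial (\<lambda>s t. psi (True, True) s p11 p20 t) p10 p21 D \<and>
        (lam > 0 \<longrightarrow> h (p10, p21) > 0 \<longrightarrow>
           m (True, True) (p10, p21) = 1 / (lam * h (p10, p21)) * D)) \<and>
     (\<exists>D. has_mixed_partial (\<lambda>s t. psi (True, True) p10 s t p21) p11 p20 D \<and>
        (lam > 0 \<longrightarrow> h (p11, p20) > 0 \<longrightarrow>
           m (True, True) (p11, p20) = 1 / (lam * h (p11, p20)) * D)) \<and>
     (\<exists>D. has_mixed_partial (\<lambda>s t. psi (True, True) p10 s p20 t) p11 p21 D \<and>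
        (lam < 1 \<longrightarrow> h (p11, p21) > 0 \<longrightarrow>
           m (True, True) (p11, p21) = 1 / ((1 - lam) * h (p11, p21)) * D))"
proof -
  interpret prob_space M by (rule M)
  define f where "f d = (\<lambda>v. m d v * h v)" for d
  have fc00: "continuous_on ({0..1} \<times> {0..1}) (f (False,False))"
    unfolding f_def by (intro continuous_on_mult m00_cont h_cont)
  have fc11: "continuous_on ({0..1} \<times> {0..1}) (f (True,True))"
    unfolding f_def by (intro continuous_on_mult m11_cont h_cont)
  have Vm: "V \<in> borel_measurable M"
    using distributed_measurable[OF V_density] by simp
  have epsm: "eps \<in> borel_measurable M"
    using distributed_measurable[OF eps_unif] by simp
  have Ym: "\<And>d. Y d \<in> borel_measurable M" using Y_int by (rule borel_measurable_integrable)
  have Rb: "\<And>a b::real. {..a} \<times> {..b} \<in> sets (borel :: (real \<times> real) measure)"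
    by (intro borel_closed closed_Times closed_atMost)
  have RRm: "\<And>d a b. (\<lambda>\<omega>. RR a b (V \<omega>) (Y d \<omega>)) \<in> borel_measurable M"
    unfolding RR_def
    by (intro borel_measurable_times measurable_compose[OF Vm borel_measurable_indicator[OF Rb]] Ym)
  have Em: "(\<lambda>\<omega>. indicator {..lam} (eps \<omega>) :: real) \<in> borel_measurable M"
    by (intro measurable_compose[OF epsm borel_measurable_indicator]) simp
  have REm: "\<And>d a b. (\<lambda>\<omega>. RE lam a b (V \<omega>) (eps \<omega>) (Y d \<omega>)) \<in> borel_measurable M"
    unfolding RE_def
    by (intro borel_measurable_times measurable_compose[OF Vm borel_measurable_indicator[OF Rb]] Ym Em)
  have RRint: "\<And>d a b. integrable M (\<lambda>\<omega>. RR a b (V \<omega>) (Y d \<omega>))"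
    by (rule Bochner_Integration.integrable_bound[OF Y_int RRm]) (auto simp: RR_def indicator_def)
  have REint: "\<And>d a b. integrable M (\<lambda>\<omega>. RE lam a b (V \<omega>) (eps \<omega>) (Y d \<omega>))"
    by (rule Bochner_Integration.integrable_bound[OF Y_int REm]) (auto simp: RE_def indicator_def)
  have Eint: "integrable M (\<lambda>\<omega>. indicator {..lam} (eps \<omega>) :: real)"
    by (rule integrable_const_bound[where B=1, OF _ Em]) (auto simp: indicator_def)
  have keyR: "\<And>d a b. continuous_on ({0..1} \<times> {0..1}) (f d) \<Longrightarrow> 0 \<le> a \<Longrightarrow> a \<le> 1 \<Longrightarrow> 0 \<le> b \<Longrightarrow> b \<le> 1 \<Longrightarrow>
      (\<integral>\<omega>. RR a b (V \<omega>) (Y d \<omega>) \<partial>M) = Gf (f d) a b"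
  proof -
    fix d and a b :: real
    assume cont: "continuous_on ({0..1} \<times> {0..1}) (f d)" and ab: "0 \<le> a" "a \<le> 1" "0 \<le> b" "b \<le> 1"
    let ?sq = "{0..1::real} \<times> {0..1::real}"
    let ?B = "{..a} \<times> {..b} \<inter> ?sq"
    have B: "?B \<in> sets borel"
      by (intro borel_closed closed_Int closed_Times closed_atMost closed_atLeastAtMost)
    have "(\<integral>\<omega>. RR a b (V \<omega>) (Y d \<omega>) \<partial>M) = (\<integral>\<omega>. indicator ?B (V \<omega>) * Y d \<omega> \<partial>M)"
    proof (rule Bochner_Integration.integral_cong[OF refl])
      fix \<omega> assume "\<omega> \<in> space M"
      then have "V \<omega> \<in> ?sq" by (rule V_range)
      then show "RR a b (V \<omega>) (Y d \<omega>) = indicator ?B (V \<omega>) * Y d \<omega>"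
        by (auto simp: RR_def indicator_def)
    qed
    also have "\<dots> = (\<integral>v. indicator ?B v * (m d v * h v) \<partial>lborel)" by (rule m_MTR[OF B])
    also have "\<dots> = (\<integral>v. indicator ({..a} \<times> {..b}) v * (indicator ?sq v * f d v) \<partial>lborel)"
      by (rule Bochner_Integration.integral_cong[OF refl]) (auto simp: indicator_def f_def)
    also have "\<dots> = Gf (f d) a b" by (rule Gf_lborel[OF cont ab])
    finally show "(\<integral>\<omega>. RR a b (V \<omega>) (Y d \<omega>) \<partial>M) = Gf (f d) a b" .
  qed
  have Pe: "(\<integral>\<omega>. indicator {..lam} (eps \<omega>) \<partial>M) = lam"
  proof -
    have "(\<integral>\<omega>. indicator {..lam} (eps \<omega>) \<partial>M) = (\<integral>x. indicator {..lam} x \<partial>distr M lborel eps :: real)"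
      by (subst integral_distr[OF distributed_measurable[OF eps_unif]]) (auto simp del: integral_indicator)
    also have "\<dots> = (\<integral>x. indicator {..lam} x \<partial>density lborel (\<lambda>e. ennreal (indicator {0..1} e)))"
      using distributed_distr_eq_density[OF eps_unif] by (simp add: ennreal_indicator)
    also have "\<dots> = (\<integral>x. indicator {0..1} x *\<^sub>R indicator {..lam} x \<partial>lborel)"
      by (rule integral_density) auto
    also have "\<dots> = (\<integral>x. indicator {0..lam} x \<partial>lborel)"
      using lam by (intro Bochner_Integration.integral_cong) (auto simp: indicator_def)
    also have "\<dots> = lam" using lam by simp
    finally show ?thesis .
  qed
  have keyE: "\<And>d a b. continuous_on ({0..1} \<times> {0..1}) (f d) \<Longrightarrow> 0 \<le> a \<Longrightarrow> a \<le> 1 \<Longrightarrow> 0 \<le> b \<Longrightarrow> b \<le> 1 \<Longrightarrow>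
      (\<integral>\<omega>. RE lam a b (V \<omega>) (eps \<omega>) (Y d \<omega>) \<partial>M) = lam * Gf (f d) a b"
  proof -
    fix d and a b :: real
    assume cont: "continuous_on ({0..1} \<times> {0..1}) (f d)" and ab: "0 \<le> a" "a \<le> 1" "0 \<le> b" "b \<le> 1"
    have gm: "(\<lambda>p. indicator ({..a} \<times> {..b}) (fst p) * snd p :: real) \<in> borel_measurable borel"
    proof -
      have "(fst :: (real \<times> real) \<times> real \<Rightarrow> real \<times> real) \<in> borel_measurable borel"
        by (intro borel_measurable_continuous_onI continuous_intros)
      moreover have "(snd :: (real \<times> real) \<times> real \<Rightarrow> real) \<in> borel_measurable borel"
        by (intro borel_measurable_continuous_onI continuous_intros)
      ultimately show ?thesis
        by (intro borel_measurable_times measurable_compose[OF _ borel_measurable_indicator[OF Rb]])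
    qed
    have ind: "indep_var borel (\<lambda>\<omega>. indicator {..lam} (eps \<omega>) :: real)
        borel (\<lambda>\<omega>. (\<lambda>p. indicator ({..a} \<times> {..b}) (fst p) * snd p :: real) (V \<omega>, Y d \<omega>))"
      by (rule indep_rv_compose[OF M eps_indep _ gm]) simp
    have "(\<integral>\<omega>. RE lam a b (V \<omega>) (eps \<omega>) (Y d \<omega>) \<partial>M)
        = (\<integral>\<omega>. indicator {..lam} (eps \<omega>) * RR a b (V \<omega>) (Y d \<omega>) \<partial>M)"
      by (simp add: RE_def RR_def mult_ac)
    also have "\<dots> = (\<integral>\<omega>. indicator {..lam} (eps \<omega>) \<partial>M) * (\<integral>\<omega>. RR a b (V \<omega>) (Y d \<omega>) \<partial>M)"
      using indep_var_lebesgue_integral[OF ind Eint] RRint by (simp add: RR_def)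
    also have "\<dots> = lam * Gf (f d) a b" using Pe keyR[OF cont ab] by simp
    finally show "(\<integral>\<omega>. RE lam a b (V \<omega>) (eps \<omega>) (Y d \<omega>) \<partial>M) = lam * Gf (f d) a b" .
  qed
  have AEV: "\<And>a b. AE \<omega> in M. fst (V \<omega>) \<noteq> a \<and> snd (V \<omega>) \<noteq> b"
  proof -
    fix a b :: real
    have e1: "emeasure (lborel \<Otimes>\<^sub>M lborel) ({a} \<times> (UNIV::real set)) = emeasure lborel {a} * emeasure lborel (UNIV::real set)"
      by (rule lborel.emeasure_pair_measure_Times) auto
    have e2: "emeasure (lborel \<Otimes>\<^sub>M lborel) ((UNIV::real set) \<times> {b}) = emeasure lborel (UNIV::real set) * emeasure lborel {b}"
      by (rule lborel.emeasure_pair_measure_Times) auto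
    have N1: "{a} \<times> (UNIV::real set) \<in> null_sets lborel"
      using e1 unfolding lborel_prod by (simp add: null_sets_def borel_closed closed_Times)
    have N2: "(UNIV::real set) \<times> {b} \<in> null_sets lborel"
      using e2 unfolding lborel_prod by (simp add: null_sets_def borel_closed closed_Times)
    let ?N = "{a} \<times> (UNIV::real set) \<union> (UNIV::real set) \<times> {b}"
    have "AE v in lborel. v \<notin> ?N" by (rule AE_not_in[OF null_sets.Un[OF N1 N2]])
    then have "AE v in density lborel (\<lambda>v. ennreal (h v)). v \<notin> ?N"
      by (subst AE_density[OF distributed_borel_measurable[OF V_density]]) (auto elim: eventually_mono)
    then have "AE v in distr M lborel V. v \<notin> ?N"
      unfolding distributed_distr_eq_density[OF V_density] .
    from AE_distrD[OF distributed_measurable[OF V_density] this]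
    show "AE \<omega> in M. fst (V \<omega>) \<noteq> a \<and> snd (V \<omega>) \<noteq> b"
      by (rule eventually_mono) (auto simp: mem_Times_iff)
  qed
  define G0 where "G0 = Gf (f (False, False))"
  define G1 where "G1 = Gf (f (True, True))"
  have psi00: "psi (False, False) q10 q11 q20 q21 = G0 1 1 - G0 q10 1 - G0 1 q20 + G0 q10 q20
      - (1 - lam) * (G0 q11 q21 - G0 q10 q21 - G0 q11 q20 + G0 q10 q20)"
    if q: "0 < q10" "q10 < q11" "q11 < 1" "0 < q20" "q20 < q21" "q21 < 1" for q10 q11 q20 q21
  proof -
    let ?d = "(False, False)"
    let ?r = "\<lambda>\<omega>. RR 1 1 (V \<omega>) (Y ?d \<omega>) - RR q10 1 (V \<omega>) (Y ?d \<omega>) - RR 1 q20 (V \<omega>) (Y ?d \<omega>) + RR q10 q20 (V \<omega>) (Y ?d \<omega>)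
       - (RR q11 q21 (V \<omega>) (Y ?d \<omega>) - RR q10 q21 (V \<omega>) (Y ?d \<omega>) - RR q11 q20 (V \<omega>) (Y ?d \<omega>) + RR q10 q20 (V \<omega>) (Y ?d \<omega>))
       + (RE lam q11 q21 (V \<omega>) (eps \<omega>) (Y ?d \<omega>) - RE lam q10 q21 (V \<omega>) (eps \<omega>) (Y ?d \<omega>)
          - RE lam q11 q20 (V \<omega>) (eps \<omega>) (Y ?d \<omega>) + RE lam q10 q20 (V \<omega>) (eps \<omega>) (Y ?d \<omega>))"
    have "psi ?d q10 q11 q20 q21 = (\<integral>\<omega>. (if Dsel q10 q11 q20 q21 \<omega> = ?d then Y ?d \<omega> else 0) \<partial>M)"
      unfolding psi_def[OF q] by (simp only: sum_sel)
    also have "\<dots> = (\<integral>\<omega>. ?r \<omega> \<partial>M)"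
    proof (rule Bochner_Integration.integral_cong[OF refl])
      fix \<omega> assume \<omega>: "\<omega> \<in> space M"
      obtain v1 v2 where v: "V \<omega> = (v1, v2)" by (cases "V \<omega>")
      have vr: "0 \<le> v1" "v1 \<le> 1" "0 \<le> v2" "v2 \<le> 1" using V_range[OF \<omega>] v by auto
      show "(if Dsel q10 q11 q20 q21 \<omega> = ?d then Y ?d \<omega> else 0) = ?r \<omega>"
        unfolding D_sel[OF q \<omega>] v by (rule comb00[OF vr q])
    qed
    also have "\<dots> = G0 1 1 - G0 q10 1 - G0 1 q20 + G0 q10 q20
      - (1 - lam) * (G0 q11 q21 - G0 q10 q21 - G0 q11 q20 + G0 q10 q20)"
      using q by (simp add: RRint REint keyR[OF fc00] keyE[OF fc00] G0_def algebra_simps)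
    finally show ?thesis .
  qed
  have psi11: "psi (True, True) q10 q11 q20 q21 = G1 q11 q21
      - lam * (G1 q11 q21 - G1 q10 q21 - G1 q11 q20 + G1 q10 q20)"
    if q: "0 < q10" "q10 < q11" "q11 < 1" "0 < q20" "q20 < q21" "q21 < 1" for q10 q11 q20 q21
  proof -
    let ?d = "(True, True)"
    let ?r = "\<lambda>\<omega>. RR q11 q21 (V \<omega>) (Y ?d \<omega>)
       - (RE lam q11 q21 (V \<omega>) (eps \<omega>) (Y ?d \<omega>) - RE lam q10 q21 (V \<omega>) (eps \<omega>) (Y ?d \<omega>)
          - RE lam q11 q20 (V \<omega>) (eps \<omega>) (Y ?d \<omega>) + RE lam q10 q20 (V \<omega>) (eps \<omega>) (Y ?d \<omega>))"
    have "psi ?d q10 q11 q20 q21 = (\<integral>\<omega>. (if Dsel q10 q11 q20 q21 \<omega> = ?d then Y ?d \<omega> else 0) \<partial>M)"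
      unfolding psi_def[OF q] by (simp only: sum_sel)
    also have "\<dots> = (\<integral>\<omega>. ?r \<omega> \<partial>M)"
    proof (rule integral_cong_AE)
      have "(\<lambda>\<omega>. if Dsel q10 q11 q20 q21 \<omega> = ?d then Y ?d \<omega> else 0)
          = (\<lambda>\<omega>. if \<omega> \<in> Dsel q10 q11 q20 q21 -` {?d} then Y ?d \<omega> else 0)" by auto
      also have "\<dots> \<in> borel_measurable M"
        by (rule measurable_If_set[OF Ym borel_measurable_const measurable_sets[OF D_meas]]) simp
      finally show "(\<lambda>\<omega>. if Dsel q10 q11 q20 q21 \<omega> = ?d then Y ?d \<omega> else 0) \<in> borel_measurable M" .
      show "?r \<in> borel_measurable M"
        by (intro borel_measurable_add borel_measurable_diff RRm REm)
      show "AE \<omega> in M. (if Dsel q10 q11 q20 q21 \<omega> = ?d then Y ?d \<omega> else 0) = ?r \<omega>"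
        using AEV[of q11 q21]
      proof (rule AE_mp[OF _ AE_I2])
        fix \<omega> assume \<omega>: "\<omega> \<in> space M"
        obtain v1 v2 where v: "V \<omega> = (v1, v2)" by (cases "V \<omega>")
        have vr: "0 \<le> v1" "v1 \<le> 1" "0 \<le> v2" "v2 \<le> 1" using V_range[OF \<omega>] v by auto
        show "fst (V \<omega>) \<noteq> q11 \<and> snd (V \<omega>) \<noteq> q21 \<longrightarrow> (if Dsel q10 q11 q20 q21 \<omega> = ?d then Y ?d \<omega> else 0) = ?r \<omega>"
          using comb11[OF vr q _ _ D_NE[OF q \<omega>, unfolded v] D_sel[OF q \<omega>, unfolded v]] v by simp
      qed
    qed
    also have "\<dots> = G1 q11 q21 - lam * (G1 q11 q21 - G1 q10 q21 - G1 q11 q20 + G1 q10 q20)"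
      using q by (simp add: RRint REint keyR[OF fc11] keyE[OF fc11] G1_def algebra_simps)
    finally show ?thesis .
  qed
  define r where "r = min (min p10 (p11 - p10)) (min (min (1 - p11) p20) (min (p21 - p20) (1 - p21)))"
  have r: "r > 0" using p by (simp add: r_def)
  have rb: "r \<le> p10" "r \<le> p11 - p10" "r \<le> 1 - p11" "r \<le> p20" "r \<le> p21 - p20" "r \<le> 1 - p21"
    by (simp_all add: r_def)
  have c1: "has_mixed_partial (\<lambda>s t. psi (False, False) s p11 t p21) p10 p20 (lam * f (False, False) (p10, p20))"
    apply (rule mixed[OF fc00 _ _ _ _ r, where kt = "\<lambda>t. G0 1 1 - G0 1 t - (1-lam)*(G0 p11 p21 - G0 p11 t)" and ks = "\<lambda>s. - G0 s 1 + (1-lam) * G0 s p21"])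
    apply (use p in linarith)+
    subgoal for s t using p rb by (subst psi00) (auto simp: abs_less_iff G0_def algebra_simps)
    apply (simp only: G0_def)
    apply (rule DERIV_add DERIV_diff DERIV_minus DERIV_cmult Gf_deriv1[OF fc00] | use p in linarith)+
    done
  have c2: "has_mixed_partial (\<lambda>s t. psi (False, False) s p11 p20 t) p10 p21 ((1-lam) * f (False, False) (p10, p21))"
    apply (rule mixed[OF fc00 _ _ _ _ r, where kt = "\<lambda>t. G0 1 1 - G0 1 p20 - (1-lam)*(G0 p11 t - G0 p11 p20)" and ks = "\<lambda>s. - G0 s 1 + G0 s p20 - (1-lam) * G0 s p20"])
    apply (use p in linarith)+
    subgoal for s t using p rb by (subst psi00) (auto simp: abs_less_iff G0_def algebra_simps)
    apply (simp only: G0_def)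
    apply (rule DERIV_add DERIV_diff DERIV_minus DERIV_cmult Gf_deriv1[OF fc00] | use p in linarith)+
    done
  have c3: "has_mixed_partial (\<lambda>s t. psi (False, False) p10 s t p21) p11 p20 ((1-lam) * f (False, False) (p11, p20))"
    apply (rule mixed[OF fc00 _ _ _ _ r, where kt = "\<lambda>t. G0 1 1 - G0 p10 1 - G0 1 t + G0 p10 t - (1-lam)*(- G0 p10 p21 + G0 p10 t)" and ks = "\<lambda>s. - ((1-lam) * G0 s p21)"])
    apply (use p in linarith)+
    subgoal for s t using p rb by (subst psi00) (auto simp: abs_less_iff G0_def algebra_simps)
    apply (simp only: G0_def)
    apply (rule DERIV_add DERIV_diff DERIV_minus DERIV_cmult Gf_deriv1[OF fc00] | use p in linarith)+
    done
  have c4: "has_mixed_partial (\<lambda>s t. psi (False, False) p10 s p20 t) p11 p21 ((-(1-lam)) * f (False, False) (p11, p21))"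
    apply (rule mixed[OF fc00 _ _ _ _ r, where kt = "\<lambda>t. G0 1 1 - G0 p10 1 - G0 1 p20 + G0 p10 p20 - (1-lam)*(- G0 p10 t + G0 p10 p20)" and ks = "\<lambda>s. (1-lam) * G0 s p20"])
    apply (use p in linarith)+
    subgoal for s t using p rb by (subst psi00) (auto simp: abs_less_iff G0_def algebra_simps)
    apply (simp only: G0_def)
    apply (rule DERIV_add DERIV_diff DERIV_minus DERIV_cmult Gf_deriv1[OF fc00] | use p in linarith)+
    done
  have c5: "has_mixed_partial (\<lambda>s t. psi (True, True) s p11 t p21) p10 p20 ((-lam) * f (True, True) (p10, p20))"
    apply (rule mixed[OF fc11 _ _ _ _ r, where kt = "\<lambda>t. G1 p11 p21 - lam*(G1 p11 p21 - G1 p11 t)" and ks = "\<lambda>s. lam * G1 s p21"])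
    apply (use p in linarith)+
    subgoal for s t using p rb by (subst psi11) (auto simp: abs_less_iff G1_def algebra_simps)
    apply (simp only: G1_def)
    apply (rule DERIV_add DERIV_diff DERIV_minus DERIV_cmult Gf_deriv1[OF fc11] | use p in linarith)+
    done
  have c6: "has_mixed_partial (\<lambda>s t. psi (True, True) s p11 p20 t) p10 p21 (lam * f (True, True) (p10, p21))"
    apply (rule mixed[OF fc11 _ _ _ _ r, where kt = "\<lambda>t. G1 p11 t - lam*(G1 p11 t - G1 p11 p20)" and ks = "\<lambda>s. - (lam * G1 s p20)"])
    apply (use p in linarith)+
    subgoal for s t using p rb by (subst psi11) (auto simp: abs_less_iff G1_def algebra_simps)
    apply (simp only: G1_def)
    apply (rule DERIV_add DERIV_diff DERIV_minus DERIV_cmult Gf_deriv1[OF fc11] | use p in linarith)+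
    done
  have c7: "has_mixed_partial (\<lambda>s t. psi (True, True) p10 s t p21) p11 p20 (lam * f (True, True) (p11, p20))"
    apply (rule mixed[OF fc11 _ _ _ _ r, where kt = "\<lambda>t. lam * G1 p10 p21 - lam * G1 p10 t" and ks = "\<lambda>s. G1 s p21 - lam * G1 s p21"])
    apply (use p in linarith)+
    subgoal for s t using p rb by (subst psi11) (auto simp: abs_less_iff G1_def algebra_simps)
    apply (simp only: G1_def)
    apply (rule DERIV_add DERIV_diff DERIV_minus DERIV_cmult Gf_deriv1[OF fc11] | use p in linarith)+
    done
  have c8: "has_mixed_partial (\<lambda>s t. psi (True, True) p10 s p20 t) p11 p21 ((1-lam) * f (True, True) (p11, p21))"
    apply (rule mixed[OF fc11 _ _ _ _ r, where kt = "\<lambda>t. lam * G1 p10 t - lam * G1 p10 p20" and ks = "\<lambda>s. lam * G1 s p20"])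
    apply (use p in linarith)+
    subgoal for s t using p rb by (subst psi11) (auto simp: abs_less_iff G1_def algebra_simps)
    apply (simp only: G1_def)
    apply (rule DERIV_add DERIV_diff DERIV_minus DERIV_cmult Gf_deriv1[OF fc11] | use p in linarith)+
    done
  show ?thesis
    apply (intro conjI)
    subgoal by (rule exI[of _ "lam * f (False, False) (p10, p20)"], intro conjI c1 impI) (auto simp: f_def field_simps)
    subgoal by (rule exI[of _ "(1-lam) * f (False, False) (p10, p21)"], intro conjI c2 impI) (auto simp: f_def field_simps)
    subgoal by (rule exI[of _ "(1-lam) * f (False, False) (p11, p20)"], intro conjI c3 impI) (auto simp: f_def field_simps)
    subgoal by (rule exI[of _ "(-(1-lam)) * f (False, False) (p11, p21)"], intro conjI c4 impI) (auto simp: f_def field_simps)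
    subgoal by (rule exI[of _ "(-lam) * f (True, True) (p10, p20)"], intro conjI c5 impI) (auto simp: f_def field_simps)
    subgoal by (rule exI[of _ "lam * f (True, True) (p10, p21)"], intro conjI c6 impI) (auto simp: f_def field_simps)
    subgoal by (rule exI[of _ "lam * f (True, True) (p11, p20)"], intro conjI c7 impI) (auto simp: f_def field_simps)
    subgoal by (rule exI[of _ "(1-lam) * f (True, True) (p11, p21)"], intro conjI c8 impI) (auto simp: f_def field_simps)
    done
qed

end
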